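(* Let $T_1\subseteq T_2\subseteq\cdots$ be well ordered sets, each $T_n$ carrying the restriction of the order of $T_{n+1}$, all having the same minimum and the same maximum. Let $T=\bigcup_n T_n$ with the induced linear order and let $\bar T$ be its completion. Then $\bar T$, with its order topology, is a Radon-Nikodým compact space.
   Context: The completion of a linearly ordered set $T$ is the unique linearly ordered set $\bar T\supseteq T$ (extending the order of $T$) such that $\bar T$ is compact in its order topology and $]x,y]\cap T\neq\emptyset$ for all $x<y$ in $\bar T$, where $]x,y]=\{z:x<z\le y\}$. A map $d:K\times K\to[0,+\infty)$ fragments a topological space $K$ if for every nonempty closed $L\subseteq K$ and every $\varepsilon>0$ there is a nonempty relatively open $U\subseteq L$ with $\sup\{d(x,y):x,y\in U\}<\varepsilon$; $d$ is lower semicontinuous if $\{(x,y):d(x,y)\le a\}$ is closed for all $a\ge0$. A compact space $K$ is Radon-Nikodým compact if there is a lower semicontinuous metric on $K$ which fragments $K$. *)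

theory Defs
  imports "HOL-Analysis.Analysis"
begin

definition well_ordered_set :: "'a::linorder set \<Rightarrow> bool" where
  "well_ordered_set S \<longleftrightarrow> (\<forall>A. A \<subseteq> S \<and> A \<noteq> {} \<longrightarrow> (\<exists>m\<in>A. \<forall>x\<in>A. m \<le> x))"

definition order_topology_on :: "'a::linorder set \<Rightarrow> 'a topology" where
  "order_topology_on K =
     subtopology
       (topology_generated_by ({{x\<in>K. x < a} | a. a \<in> K} \<union> {{x\<in>K. a < x} | a. a \<in> K})) K"

definition is_completion :: "'a::linorder set \<Rightarrow> 'a set \<Rightarrow> bool" where
  "is_completion T K \<longleftrightarrow> T \<subseteq> K \<and> compact_space (order_topology_on K) \<and>
     (\<forall>x\<in>K. \<forall>y\<in>K. x < y \<longrightarrow> {z\<in>K. x < z \<and> z \<le> y} \<inter> T \<noteq> {})"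

definition fragments :: "('a \<Rightarrow> 'a \<Rightarrow> real) \<Rightarrow> 'a topology \<Rightarrow> bool" where
  "fragments d X \<longleftrightarrow>
     (\<forall>L \<epsilon>. closedin X L \<and> L \<noteq> {} \<and> \<epsilon> > 0 \<longrightarrow>
        (\<exists>U. openin (subtopology X L) U \<and> U \<noteq> {} \<and>
             (\<exists>c < \<epsilon>. \<forall>x\<in>U. \<forall>y\<in>U. d x y \<le> c)))"

definition lower_semicontinuous_map2 :: "('a \<Rightarrow> 'a \<Rightarrow> real) \<Rightarrow> 'a topology \<Rightarrow> bool" where
  "lower_semicontinuous_map2 d X \<longleftrightarrow>
     (\<forall>a\<ge>0. closedin (prod_topology X X)
                {(x,y). x \<in> topspace X \<and> y \<in> topspace X \<and> d x y \<le> a})"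

definition radon_nikodym_compact :: "'a topology \<Rightarrow> bool" where
  "radon_nikodym_compact X \<longleftrightarrow> compact_space X \<and>
     (\<exists>d. Metric_space (topspace X) d \<and> lower_semicontinuous_map2 d X \<and> fragments d X)"

end

theory Submission
  imports Defs
begin

locale RN =
  fixes T :: "nat \<Rightarrow> 'a::linorder set" and K :: "'a set" and M :: 'a
  assumes mono: "\<And>n. T n \<subseteq> T (Suc n)"
    and wo: "\<And>n. well_ordered_set (T n)"
    and Mmem: "\<And>n. M \<in> T n" and Mmax: "\<And>n x. x \<in> T n \<Longrightarrow> x \<le> M"
    and compl: "is_completion (\<Union>n. T n) K"
begin

abbreviation "X \<equiv> order_topology_on K"

lemma TK: "T n \<subseteq> K"
  using compl unfolding is_completion_def by blast

lemma dens: "x \<in> K \<Longrightarrow> y \<in> K \<Longrightarrow> x < y \<Longrightarrow> \<exists>t n. t \<in> T n \<and> x < t \<and> t \<le> y"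
  using compl unfolding is_completion_def by blast

lemma mono_le: "n \<le> m \<Longrightarrow> T n \<subseteq> T m"
  using lift_Suc_mono_le[of T n m] mono by blast

lemma le_M: assumes "x \<in> K" shows "x \<le> M"
proof (rule ccontr)
  assume "\<not> x \<le> M"
  hence "M < x" by simp
  then obtain t n where "t \<in> T n" "M < t" using dens[of M x] assms TK Mmem[of 0] by blast
  thus False using Mmax by (meson leD)
qed

lemma wo_min: "A \<subseteq> T n \<Longrightarrow> A \<noteq> {} \<Longrightarrow> \<exists>m\<in>A. \<forall>x\<in>A. m \<le> x"
  using wo[of n] unfolding well_ordered_set_def by blast

lemma tsX: "topspace X \<subseteq> K"
  unfolding order_topology_on_def by simp

lemma open_lt: "a \<in> K \<Longrightarrow> openin X {x\<in>K. x < a}"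
  unfolding order_topology_on_def openin_subtopology
  by (rule exI[of _ "{x\<in>K. x < a}"]) (auto intro: topology_generated_by_Basis)

lemma open_gt: "a \<in> K \<Longrightarrow> openin X {x\<in>K. a < x}"
  unfolding order_topology_on_def openin_subtopology
  by (rule exI[of _ "{x\<in>K. a < x}"]) (auto intro: topology_generated_by_Basis)

lemma closed_le: "a \<in> K \<Longrightarrow> closedin X {x\<in>topspace X. x \<le> a}"
proof -
  assume a: "a \<in> K"
  have "{x\<in>topspace X. x \<le> a} = topspace X - {x\<in>K. a < x}" using tsX by auto
  thus ?thesis using open_gt[OF a] by auto
qed

lemma closed_ge: "a \<in> K \<Longrightarrow> closedin X {x\<in>topspace X. a \<le> x}"
proof -
  assume a: "a \<in> K"
  have "{x\<in>topspace X. a \<le> x} = topspace X - {x\<in>K. x < a}" using tsX by auto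
  thus ?thesis using open_lt[OF a] by auto
qed

lemma hausdorff: "Hausdorff_space X"
  unfolding Hausdorff_space_def
proof (intro allI impI)
  have main: "\<exists>U V. openin X U \<and> openin X V \<and> x \<in> U \<and> y \<in> V \<and> disjnt U V"
    if "x \<in> topspace X" "y \<in> topspace X" "x < y" for x y
  proof (cases "\<exists>z\<in>K. x < z \<and> z < y")
    case True
    then obtain z where z: "z \<in> K" "x < z" "z < y" by blast
    show ?thesis
      by (rule exI[of _ "{w\<in>K. w < z}"], rule exI[of _ "{w\<in>K. z < w}"])
         (use z that tsX open_lt open_gt in \<open>auto simp: disjnt_def\<close>)
  next
    case False
    have "x \<in> K" "y \<in> K" using that tsX by auto
    thus ?thesis
      by (intro exI[of _ "{w\<in>K. w < y}"] exI[of _ "{w\<in>K. x < w}"])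
         (use False that open_lt open_gt in \<open>auto simp: disjnt_def\<close>)
  qed
  fix x y assume "x \<in> topspace X \<and> y \<in> topspace X \<and> x \<noteq> y"
  then consider "x < y" | "y < x" by (meson linorder_neqE)
  thus "\<exists>U V. openin X U \<and> openin X V \<and> x \<in> U \<and> y \<in> V \<and> disjnt U V"
  proof cases
    case 1 thus ?thesis using main \<open>x \<in> topspace X \<and> y \<in> topspace X \<and> x \<noteq> y\<close> by blast
  next
    case 2 then obtain U V where "openin X U \<and> openin X V \<and> y \<in> U \<and> x \<in> V \<and> disjnt U V"
      using main \<open>x \<in> topspace X \<and> y \<in> topspace X \<and> x \<noteq> y\<close> by blast
    thus ?thesis by (metis disjnt_sym)
  qed
qed

lemma compactX: "compact_space X"
  using compl unfolding is_completion_def by blast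

lemma normalX: "normal_space X"
  using compact_Hausdorff_or_regular_imp_normal_space compactX hausdorff by blast

definition G :: "'a \<Rightarrow> 'a \<Rightarrow> 'a \<Rightarrow> real" where
  "G a b = (SOME f. continuous_map X euclideanreal f \<and> (\<forall>x\<in>topspace X. x \<le> a \<longrightarrow> f x = 0)
      \<and> (\<forall>x\<in>topspace X. b \<le> x \<longrightarrow> f x = 1))"

definition F :: "'a \<Rightarrow> 'a \<Rightarrow> 'a \<Rightarrow> real" where
  "F a b x = max 0 (min 1 (G a b x))"

lemma G_props: assumes "a \<in> K" "b \<in> K" "a < b"
  shows "continuous_map X euclideanreal (G a b) \<and> (\<forall>x\<in>topspace X. x \<le> a \<longrightarrow> G a b x = 0)
      \<and> (\<forall>x\<in>topspace X. b \<le> x \<longrightarrow> G a b x = 1)"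
proof -
  have "disjnt {x\<in>topspace X. x \<le> a} {x\<in>topspace X. b \<le> x}"
    using assms by (auto simp: disjnt_def)
  then obtain f where f: "continuous_map X euclideanreal f" "f ` {x\<in>topspace X. x \<le> a} \<subseteq> {0}"
     "f ` {x\<in>topspace X. b \<le> x} \<subseteq> {1}"
    using Urysohn_lemma_alt[OF normalX closed_le[OF assms(1)] closed_ge[OF assms(2)], of 0 1] by blast
  hence "continuous_map X euclideanreal f \<and> (\<forall>x\<in>topspace X. x \<le> a \<longrightarrow> f x = 0)
      \<and> (\<forall>x\<in>topspace X. b \<le> x \<longrightarrow> f x = 1)" by auto
  hence ex: "\<exists>f. continuous_map X euclideanreal f \<and> (\<forall>x\<in>topspace X. x \<le> a \<longrightarrow> f x = 0)
      \<and> (\<forall>x\<in>topspace X. b \<le> x \<longrightarrow> f x = 1)" by blast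
  show ?thesis unfolding G_def by (rule someI_ex[OF ex])
qed

lemma F_props: assumes "a \<in> K" "b \<in> K" "a < b"
  shows "continuous_map X euclideanreal (F a b)" "\<And>x. x\<in>topspace X \<Longrightarrow> x \<le> a \<Longrightarrow> F a b x = 0"
    "\<And>x. x\<in>topspace X \<Longrightarrow> b \<le> x \<Longrightarrow> F a b x = 1"
  using G_props[OF assms] unfolding F_def[abs_def]
  by (auto intro!: continuous_intros)

lemma F_bound: "0 \<le> F a b x" "F a b x \<le> 1" "\<bar>F a b x - F a b y\<bar> \<le> 1"
  unfolding F_def by auto


definition P :: "nat \<Rightarrow> ('a \<times> 'a) set" where
  "P n = {(a,b). a \<in> K \<and> b \<in> T n \<and> a < b \<and>
     ((a \<in> T n \<and> (\<forall>r\<in>T n. \<not>(a<r \<and> r<b))) \<or> (\<forall>r\<in>K. \<not>(a<r \<and> r<b)))}"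

lemma P_K: "(a,b) \<in> P n \<Longrightarrow> a \<in> K \<and> b \<in> K \<and> a < b"
  using TK unfolding P_def by auto

lemma sepA: assumes "x \<in> K" "t1 \<in> T n1" "x < t1" "t1 < y" "y \<in> K"
  shows "\<exists>n a b. (a,b) \<in> P n \<and> x \<le> a \<and> b \<le> y"
proof -
  obtain t2 n2 where t2: "t2 \<in> T n2" "t1 < t2" "t2 \<le> y" using dens[of t1 y] assms TK by blast
  define k where "k = max n1 n2"
  have "T n1 \<subseteq> T k" "T n2 \<subseteq> T k" using mono_le unfolding k_def by auto
  hence tk: "t1 \<in> T k" "t2 \<in> T k" using assms t2 by auto
  obtain b where b: "b \<in> {r\<in>T k. t1<r}" "\<forall>z\<in>{r\<in>T k. t1<r}. b \<le> z"
    using wo_min[of "{r\<in>T k. t1<r}" k] tk t2 by blast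
  have "(t1,b) \<in> P k" unfolding P_def using b tk TK by (force simp: not_less)
  moreover have "b \<le> y" using b tk t2 by force
  ultimately show ?thesis using assms by force
qed

lemma sep: assumes "x \<in> K" "y \<in> K" "x < y"
  shows "\<exists>n a b. (a,b) \<in> P n \<and> x \<le> a \<and> b \<le> y"
proof -
  obtain t1 n1 where t1: "t1 \<in> T n1" "x < t1" "t1 \<le> y" using dens assms by blast
  show ?thesis
  proof (cases "t1 < y")
    case True thus ?thesis using sepA assms t1 by blast
  next
    case False hence ty: "t1 = y" using t1 by auto
    show ?thesis
    proof (cases "\<exists>z\<in>K. x<z \<and> z<y")
      case True then obtain z where z: "z\<in>K" "x<z" "z<y" by blast
      obtain t n where "t \<in> T n" "x<t" "t\<le>z" using dens[of x z] assms z by blast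
      thus ?thesis using sepA[of x t n y] assms z by fastforce
    next
      case False
      have "(x,y) \<in> P n1" unfolding P_def using False assms ty t1 by auto
      thus ?thesis by blast
    qed
  qed
qed

definition D :: "'a \<Rightarrow> 'a \<Rightarrow> real set" where
  "D x y = insert 0 {(1/2)^n * \<bar>F a b x - F a b y\<bar> | n a b. (a,b) \<in> P n}"

definition d :: "'a \<Rightarrow> 'a \<Rightarrow> real" where "d x y = Sup (D x y)"

lemma elem_le1: "(1/2::real)^n * \<bar>F a b x - F a b y\<bar> \<le> 1"
  by (rule mult_le_one) (auto simp: F_bound power_le_one)

lemma D_bdd: "bdd_above (D x y)"
  unfolding D_def bdd_above_def using elem_le1 by (intro exI[of _ 1]) auto

lemma d_ge: "(a,b) \<in> P n \<Longrightarrow> (1/2)^n * \<bar>F a b x - F a b y\<bar> \<le> d x y"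
  unfolding d_def by (rule cSup_upper[OF _ D_bdd]) (auto simp: D_def)

lemma d_nonneg: "0 \<le> d x y"
  unfolding d_def by (rule cSup_upper[OF _ D_bdd]) (auto simp: D_def)

lemma d_le: "0 \<le> c \<Longrightarrow> (\<And>n a b. (a,b)\<in>P n \<Longrightarrow> (1/2)^n * \<bar>F a b x - F a b y\<bar> \<le> c) \<Longrightarrow> d x y \<le> c"
  unfolding d_def by (rule cSup_least) (auto simp: D_def)

lemma d_comm: "d x y = d y x"
proof -
  have "D x y = D y x" unfolding D_def by (simp add: abs_minus_commute)
  thus ?thesis unfolding d_def by simp
qed

lemma metric: "Metric_space (topspace X) d"
proof
  fix x y show "0 \<le> d x y" by (rule d_nonneg)
  show "d x y = d y x" by (rule d_comm)
next
  fix x y assume xy: "x \<in> topspace X" "y \<in> topspace X"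
  have pos: "d x y > 0" if h: "x \<in> topspace X" "y \<in> topspace X" "x < y" for x y
  proof -
    obtain n a b where ab: "(a,b) \<in> P n" "x \<le> a" "b \<le> y" using sep[of x y] h tsX by blast
    have "F a b x = 0" "F a b y = 1" using F_props[of a b] P_K[OF ab(1)] ab h by auto
    hence "(1/2)^n * \<bar>F a b x - F a b y\<bar> > 0" by simp
    thus ?thesis using d_ge[OF ab(1), of x y] by linarith
  qed
  show "d x y = 0 \<longleftrightarrow> x = y"
  proof
    assume "d x y = 0" thus "x = y" using pos[of x y] pos[of y x] xy d_comm[of x y]
      by (metis less_irrefl linorder_neqE)
  next
    assume "x = y" thus "d x y = 0" using d_le[of 0 x y] d_nonneg[of x y] by simp
  qed
next
  fix x y z
  show "d x z \<le> d x y + d y z"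
  proof (rule d_le)
    show "0 \<le> d x y + d y z" using d_nonneg[of x y] d_nonneg[of y z] by simp
    fix n a b assume ab: "(a,b) \<in> P n"
    have "(1/2::real)^n * \<bar>F a b x - F a b z\<bar> \<le> (1/2)^n * \<bar>F a b x - F a b y\<bar> + (1/2)^n * \<bar>F a b y - F a b z\<bar>"
      by (simp add: distrib_left[symmetric] mult_left_mono)
    thus "(1/2::real)^n * \<bar>F a b x - F a b z\<bar> \<le> d x y + d y z"
      using d_ge[OF ab, of x y] d_ge[OF ab, of y z] by linarith
  qed
qed


lemma lsc: "lower_semicontinuous_map2 d X"
  unfolding lower_semicontinuous_map2_def
proof (intro allI impI)
  fix c :: real assume c: "0 \<le> c"
  let ?Y = "prod_topology X X"
  define h where "h = (\<lambda>(n::nat,a,b) (p::'a\<times>'a). (1/2::real)^n * \<bar>F a b (fst p) - F a b (snd p)\<bar>)"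
  define I where "I = {(n,a,b). (a,b) \<in> P n}"
  have eq: "{(x,y). x \<in> topspace X \<and> y \<in> topspace X \<and> d x y \<le> c} =
      \<Inter> (insert (topspace ?Y) ((\<lambda>i. {p\<in>topspace ?Y. h i p \<in> {..c}}) ` I))"
  proof (rule set_eqI)
    fix p :: "'a \<times> 'a"
    obtain x y where p: "p = (x,y)" by fastforce
    have "d x y \<le> c \<longleftrightarrow> (\<forall>n a b. (a,b) \<in> P n \<longrightarrow> (1/2::real)^n * \<bar>F a b x - F a b y\<bar> \<le> c)"
      using d_le[OF c] d_ge by (meson order_trans)
    thus "p \<in> {(x,y). x \<in> topspace X \<and> y \<in> topspace X \<and> d x y \<le> c} \<longleftrightarrow>
      p \<in> \<Inter> (insert (topspace ?Y) ((\<lambda>i. {p\<in>topspace ?Y. h i p \<in> {..c}}) ` I))"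
      unfolding p I_def h_def by auto
  qed
  show "closedin ?Y {(x,y). x \<in> topspace X \<and> y \<in> topspace X \<and> d x y \<le> c}"
    unfolding eq
  proof (rule closedin_Inter)
    fix S assume "S \<in> insert (topspace ?Y) ((\<lambda>i. {p\<in>topspace ?Y. h i p \<in> {..c}}) ` I)"
    then consider "S = topspace ?Y" | i where "i \<in> I" "S = {p\<in>topspace ?Y. h i p \<in> {..c}}" by blast
    thus "closedin ?Y S"
    proof cases
      case 1 thus ?thesis by (metis closedin_topspace)
    next
      case 2
      then obtain n a b where i: "i = (n,a,b)" "(a,b) \<in> P n" unfolding I_def by auto
      have Fc: "continuous_map X euclideanreal (F a b)" using F_props(1) P_K[OF i(2)] by blast
      have c1: "continuous_map ?Y euclideanreal (\<lambda>p. F a b (fst p))"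
        using continuous_map_compose[OF continuous_map_fst Fc] by (simp add: o_def)
      have c2: "continuous_map ?Y euclideanreal (\<lambda>p. F a b (snd p))"
        using continuous_map_compose[OF continuous_map_snd Fc] by (simp add: o_def)
      have "continuous_map ?Y euclideanreal (h i)"
        unfolding i h_def by (simp, intro continuous_intros c1 c2)
      moreover have "closedin euclideanreal {..c}" using closed_closedin by auto
      ultimately show ?thesis using 2 closedin_continuous_map_preimage by blast
    qed
  qed simp
qed

lemma subsingleton_finite: "(\<And>x y. x\<in>S \<Longrightarrow> y\<in>S \<Longrightarrow> x = y) \<Longrightarrow> finite S"
  by (metis finite.emptyI finite_insert insertI2 subsetI finite_subset equals0I insertI1 insert_absorb)

lemma finite_P1: "finite {b. (u,b) \<in> P n}"
proof -
  have "{b. (u,b) \<in> P n} \<subseteq> {b. (u,b) \<in> P n \<and> u \<in> T n \<and> (\<forall>r\<in>T n. \<not>(u<r \<and> r<b))}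
     \<union> {b. (u,b) \<in> P n \<and> (\<forall>r\<in>K. \<not>(u<r \<and> r<b))}" unfolding P_def by auto
  moreover have "finite {b. (u,b) \<in> P n \<and> u \<in> T n \<and> (\<forall>r\<in>T n. \<not>(u<r \<and> r<b))}"
    by (rule subsingleton_finite) (auto simp: P_def; meson linorder_neqE)
  moreover have "finite {b. (u,b) \<in> P n \<and> (\<forall>r\<in>K. \<not>(u<r \<and> r<b))}"
    by (rule subsingleton_finite) (use TK in \<open>auto simp: P_def; meson linorder_neqE subsetD\<close>)
  ultimately show ?thesis using finite_subset by blast
qed

lemma finite_P2: "finite {a. (a,u) \<in> P n}"
proof -
  have "{a. (a,u) \<in> P n} \<subseteq> {a. (a,u) \<in> P n \<and> a \<in> T n \<and> (\<forall>r\<in>T n. \<not>(a<r \<and> r<u))}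
     \<union> {a. (a,u) \<in> P n \<and> (\<forall>r\<in>K. \<not>(a<r \<and> r<u))}" unfolding P_def by auto
  moreover have "finite {a. (a,u) \<in> P n \<and> a \<in> T n \<and> (\<forall>r\<in>T n. \<not>(a<r \<and> r<u))}"
    by (rule subsingleton_finite) (auto simp: P_def; meson linorder_neqE)
  moreover have "finite {a. (a,u) \<in> P n \<and> (\<forall>r\<in>K. \<not>(a<r \<and> r<u))}"
    by (rule subsingleton_finite) (auto simp: P_def; meson linorder_neqE)
  ultimately show ?thesis using finite_subset by blast
qed


lemma level:
  assumes A: "A \<subseteq> topspace X" "A \<noteq> {}" and del: "\<delta> > 0"
  shows "\<exists>Q. openin X Q \<and> A \<inter> Q \<noteq> {} \<and>
     (\<forall>a b. (a,b) \<in> P n \<longrightarrow> (\<forall>x\<in>A\<inter>Q. \<forall>y\<in>A\<inter>Q. \<bar>F a b x - F a b y\<bar> \<le> \<delta>))"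
proof -
  define B where "B = {b\<in>T n. \<exists>x\<in>A. x \<le> b}"
  have "M \<in> B" using A Mmem le_M tsX unfolding B_def by blast
  then obtain u where u: "u \<in> B" "\<forall>z\<in>B. u \<le> z" using wo_min[of B n] unfolding B_def by blast
  have uT: "u \<in> T n" using u B_def by auto
  obtain x1 where x1: "x1 \<in> A" "x1 \<le> u" using u B_def by auto
  have below: "r < x" if "r \<in> T n" "r < u" "x \<in> A" for r x
  proof (rule ccontr)
    assume "\<not> r < x" hence "r \<in> B" using that B_def by (auto simp: not_less)
    thus False using u that by auto
  qed
  obtain Q1 where Q1: "openin X Q1" "x1 \<in> Q1" "\<And>x r. x \<in> Q1 \<Longrightarrow> r \<in> T n \<Longrightarrow> u < r \<Longrightarrow> x < r"
  proof (cases "\<exists>r\<in>T n. u < r")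
    case True
    then obtain s where s: "s \<in> {r\<in>T n. u<r}" "\<forall>z\<in>{r\<in>T n. u<r}. s \<le> z"
      using wo_min[of "{r\<in>T n. u<r}" n] by blast
    show ?thesis
    proof (rule that[of "{x\<in>K. x < s}"])
      show "openin X {x\<in>K. x < s}" using open_lt[of s] s TK by auto
      show "x1 \<in> {x\<in>K. x < s}" using s x1 A tsX by auto
      show "\<And>x r. x \<in> {x\<in>K. x < s} \<Longrightarrow> r \<in> T n \<Longrightarrow> u < r \<Longrightarrow> x < r"
        using s by force
    qed
  next
    case False
    show ?thesis by (rule that[of "topspace X"]) (use False x1 A in auto)
  qed
  define A' where "A' = A \<inter> Q1"
  have key: "(\<forall>x\<in>A'. x \<le> a) \<or> (\<forall>x\<in>A'. b \<le> x)" if ab: "(a,b) \<in> P n" "a \<noteq> u" "b \<noteq> u" for a b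
  proof (rule ccontr)
    assume "\<not> ?thesis"
    then obtain x y where xy: "x \<in> A'" "a < x" "y \<in> A'" "y < b" by (auto simp: not_le)
    have bT: "b \<in> T n" using ab P_def by auto
    have bu: "u \<le> b"
    proof (rule ccontr)
      assume "\<not> u \<le> b" hence "b < y" using below[of b y] bT xy A'_def by auto
      thus False using xy by auto
    qed
    have xK: "x \<in> K" using xy A'_def A tsX by auto
    from ab(1) have "(a \<in> T n \<and> (\<forall>r\<in>T n. \<not>(a<r \<and> r<b))) \<or> (\<forall>r\<in>K. \<not>(a<r \<and> r<b))"
      unfolding P_def by auto
    thus False
    proof
      assume t1: "a \<in> T n \<and> (\<forall>r\<in>T n. \<not>(a<r \<and> r<b))"
      have "a \<le> u"
      proof (rule ccontr)
        assume "\<not> a \<le> u" hence "x < a" using Q1(3)[of x a] t1 xy A'_def by auto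
        thus False using xy by auto
      qed
      hence "a < u" "u < b" using ab bu by auto
      thus False using t1 uT by blast
    next
      assume t2: "\<forall>r\<in>K. \<not>(a<r \<and> r<b)"
      hence "b \<le> x" using xK xy by (meson not_le)
      moreover have "\<not> u < b"
      proof
        assume "u < b"
        hence "x < b" using Q1(3)[of x b] xy(1) A'_def bT by blast
        thus False using \<open>b \<le> x\<close> by simp
      qed
      ultimately show False using bu ab by auto
    qed
  qed
  define W where "W = {(a,b). (a,b) \<in> P n \<and> (a = u \<or> b = u)}"
  have "W \<subseteq> ({u} \<times> {b. (u,b) \<in> P n}) \<union> ({a. (a,u) \<in> P n} \<times> {u})" unfolding W_def by auto
  hence finW: "finite W" using finite_P1[of u n] finite_P2[of u n] finite_subset by blast
  have Wc: "continuous_map X euclideanreal (F (fst w) (snd w))" if "w \<in> W" for w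
    using that F_props(1) P_K unfolding W_def by auto
  define Q2 where "Q2 = (\<Inter>w\<in>W. {x\<in>topspace X. F (fst w) (snd w) x \<in> ball (F (fst w) (snd w) x1) (\<delta>/2)}) \<inter> topspace X"
  have oQ2: "openin X Q2" unfolding Q2_def
    by (rule openin_INT[OF finW]) (intro openin_continuous_map_preimage[OF Wc], auto)
  define Q where "Q = Q1 \<inter> Q2"
  have x1A: "x1 \<in> topspace X" using x1 A by auto
  show ?thesis
  proof (intro exI conjI allI impI ballI)
    show "openin X Q" unfolding Q_def using Q1 oQ2 by auto
    have "x1 \<in> Q2" unfolding Q2_def using x1A del by auto
    thus "A \<inter> Q \<noteq> {}" using x1 Q1 unfolding Q_def by auto
    fix a b x y assume ab: "(a,b) \<in> P n" and x: "x \<in> A \<inter> Q" and y: "y \<in> A \<inter> Q"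
    have xt: "x \<in> topspace X" "y \<in> topspace X" using x y A by auto
    show "\<bar>F a b x - F a b y\<bar> \<le> \<delta>"
    proof (cases "a = u \<or> b = u")
      case True
      hence "(a,b) \<in> W" using ab W_def by auto
      hence "\<bar>F a b x1 - F a b x\<bar> < \<delta>/2" "\<bar>F a b x1 - F a b y\<bar> < \<delta>/2"
        using x y unfolding Q_def Q2_def by (auto simp: dist_real_def)
      thus ?thesis by linarith
    next
      case False
      hence k: "(\<forall>x\<in>A'. x \<le> a) \<or> (\<forall>x\<in>A'. b \<le> x)" using key ab by auto
      have "x \<in> A'" "y \<in> A'" using x y unfolding A'_def Q_def by auto
      with k have "(F a b x = 0 \<and> F a b y = 0) \<or> (F a b x = 1 \<and> F a b y = 1)"
        using F_props(2,3)[of a b] P_K[OF ab] xt by metis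
      thus ?thesis using del by auto
    qed
  qed
qed

lemma multi:
  assumes A: "A \<subseteq> topspace X" "A \<noteq> {}" and del: "\<delta> > 0"
  shows "\<exists>Q. openin X Q \<and> A \<inter> Q \<noteq> {} \<and>
     (\<forall>n<N. \<forall>a b. (a,b) \<in> P n \<longrightarrow> (\<forall>x\<in>A\<inter>Q. \<forall>y\<in>A\<inter>Q. \<bar>F a b x - F a b y\<bar> \<le> \<delta>))"
proof (induction N)
  case 0
  show ?case by (rule exI[of _ "topspace X"]) (use A in auto)
next
  case (Suc N)
  then obtain Q where Q: "openin X Q" "A \<inter> Q \<noteq> {}"
    "\<forall>n<N. \<forall>a b. (a,b) \<in> P n \<longrightarrow> (\<forall>x\<in>A\<inter>Q. \<forall>y\<in>A\<inter>Q. \<bar>F a b x - F a b y\<bar> \<le> \<delta>)" by blast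
  obtain Q' where Q': "openin X Q'" "(A \<inter> Q) \<inter> Q' \<noteq> {}"
    "\<forall>a b. (a,b) \<in> P N \<longrightarrow> (\<forall>x\<in>(A\<inter>Q)\<inter>Q'. \<forall>y\<in>(A\<inter>Q)\<inter>Q'. \<bar>F a b x - F a b y\<bar> \<le> \<delta>)"
    using level[of "A \<inter> Q" \<delta> N] A Q del by blast
  show ?case
  proof (intro exI conjI)
    show "openin X (Q \<inter> Q')" using Q Q' by auto
    show "A \<inter> (Q \<inter> Q') \<noteq> {}" using Q' by (simp add: Int_assoc)
    show "\<forall>n<Suc N. \<forall>a b. (a,b) \<in> P n \<longrightarrow> (\<forall>x\<in>A\<inter>(Q \<inter> Q'). \<forall>y\<in>A\<inter>(Q \<inter> Q'). \<bar>F a b x - F a b y\<bar> \<le> \<delta>)"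
    proof (intro allI impI)
      fix n a b assume n: "n < Suc N" and ab: "(a,b) \<in> P n"
      show "\<forall>x\<in>A\<inter>(Q \<inter> Q'). \<forall>y\<in>A\<inter>(Q \<inter> Q'). \<bar>F a b x - F a b y\<bar> \<le> \<delta>"
      proof (cases "n < N")
        case True thus ?thesis using Q(3) ab by blast
      next
        case False hence "n = N" using n by auto
        thus ?thesis using Q'(3) ab by (simp add: Int_assoc)
      qed
    qed
  qed
qed

lemma frag: "fragments d X"
  unfolding fragments_def
proof (intro allI impI)
  fix L and \<epsilon> :: real assume h: "closedin X L \<and> L \<noteq> {} \<and> \<epsilon> > 0"
  obtain N where N: "(1/2::real)^N < \<epsilon>" using real_arch_pow_inv[of \<epsilon> "1/2"] h by auto
  have LX: "L \<subseteq> topspace X" using h closedin_subset by auto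
  obtain Q where Q: "openin X Q" "L \<inter> Q \<noteq> {}"
    "\<forall>n<N. \<forall>a b. (a,b)\<in>P n \<longrightarrow> (\<forall>x\<in>L\<inter>Q. \<forall>y\<in>L\<inter>Q. \<bar>F a b x - F a b y\<bar> \<le> \<epsilon>/2)"
    using multi[of L "\<epsilon>/2" N] LX h by auto
  show "\<exists>U. openin (subtopology X L) U \<and> U \<noteq> {} \<and> (\<exists>c<\<epsilon>. \<forall>x\<in>U. \<forall>y\<in>U. d x y \<le> c)"
  proof (intro exI conjI)
    show "openin (subtopology X L) (L \<inter> Q)" unfolding openin_subtopology using Q by blast
    show "L \<inter> Q \<noteq> {}" by fact
    show "max (\<epsilon>/2) ((1/2)^N) < \<epsilon>" using N h by auto
    show "\<forall>x\<in>L\<inter>Q. \<forall>y\<in>L\<inter>Q. d x y \<le> max (\<epsilon>/2) ((1/2)^N)"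
    proof (intro ballI d_le)
      show "0 \<le> max (\<epsilon>/2) ((1/2::real)^N)" by (simp add: le_max_iff_disj)
      fix x y n a b assume x: "x \<in> L \<inter> Q" and y: "y \<in> L \<inter> Q" and ab: "(a,b) \<in> P n"
      show "(1/2::real)^n * \<bar>F a b x - F a b y\<bar> \<le> max (\<epsilon>/2) ((1/2)^N)"
      proof (cases "n < N")
        case True
        have "\<bar>F a b x - F a b y\<bar> \<le> \<epsilon>/2" using Q(3) True ab x y by blast
        moreover have "(1/2::real)^n * \<bar>F a b x - F a b y\<bar> \<le> \<bar>F a b x - F a b y\<bar>"
          by (rule mult_left_le_one_le) (auto simp: power_le_one)
        ultimately show ?thesis by linarith
      next
        case False
        have "(1/2::real)^n \<le> (1/2)^N" using False by (intro power_decreasing) auto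
        moreover have "(1/2::real)^n * \<bar>F a b x - F a b y\<bar> \<le> (1/2)^n"
          by (rule mult_right_le_one_le) (auto simp: F_bound)
        ultimately show ?thesis by linarith
      qed
    qed
  qed
qed

end

theorem theorem6:
  fixes T :: "nat \<Rightarrow> 'a::linorder set" and K :: "'a set"
  assumes mono: "\<And>n. T n \<subseteq> T (Suc n)"
    and wo: "\<And>n. well_ordered_set (T n)"
    and minmax: "\<exists>m M. \<forall>n. m \<in> T n \<and> M \<in> T n \<and> (\<forall>x\<in>T n. m \<le> x \<and> x \<le> M)"
    and compl: "is_completion (\<Union>n. T n) K"
  shows "radon_nikodym_compact (order_topology_on K)"
proof -
  obtain m M where mM: "\<forall>n. m \<in> T n \<and> M \<in> T n \<and> (\<forall>x\<in>T n. m \<le> x \<and> x \<le> M)" using minmax by blast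
  interpret RN T K M using mono wo mM compl by unfold_locales auto
  show ?thesis unfolding radon_nikodym_compact_def using compactX metric lsc frag by blast
qed

end
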